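(* Assume (R) and let $n\ge1$ be odd. Then $A_n(x)=(2x-1)F_n(x(x-1))$, where for all $k\ge0$ $$(-1)^kf_{n,k}=[x^k]\,S_{n,2k}(x)=\frac1{k!}\frac{d^k}{dx^k}A^\star_{n,2k}(x)\Big|_{x=1}.$$ Here $S_{n,2k}(x)\in\mathbb C[[x]]$ for $0\le k\le d_n$ and $S_{n,2k}(x)\in\mathbb C[x]$ for $k>d_n$, in which case $S_{n,2k}$ is anti-palindromic: $S_{n,2k}(x)=-x^{2k}S_{n,2k}(x^{-1})$. The coefficients satisfy $f_{n,0}=-\alpha_n$, $f_{n,d_n}=\tfrac12\alpha_0$, $f_{n,k}=0$ for $k>d_n$, and for $0\le k\le n$ $$f_{n,k}=(-1)^k\sum_{\nu=0}^{k}\binom{2k-n}{k-\nu}s_{n,\nu}=(-1)^{k+1}\sum_{\nu=0}^{k}\binom{2k-\nu}{k}\binom{n}{\nu}\alpha_{n-\nu}.$$ For the even index $n+1$: $A_{n+1}(x)=F_{n+1}(x(x-1))$ with $f_{n+1,0}=\alpha_{n+1}$, $f_{n+1,k}=\frac{n+1}{k}f_{n,k-1}$ for $1\le k<d_{n+1}$, $f_{n+1,d_{n+1}}=\alpha_0$, and $f_{n+1,k}=0$ for $k>d_{n+1}$.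
   Context: Let $(\alpha_n)_{n\ge0}$ be an arbitrary sequence of complex numbers with Appell polynomials $A_n(x)=\sum_{\nu=0}^{n}\binom{n}{\nu}\alpha_{n-\nu}x^\nu$; property (R) means $A_n(1-x)=(-1)^nA_n(x)$ for all $n\ge0$. For $n\ge0,k\in\mathbb Z$ let $A^\star_{n,k}(x)=x^kA_n(x^{-1})$. Let $s_{n,k}=\sum_{\nu=k}^{n}\binom{n}{\nu}\binom{\nu}{k}\alpha_\nu$, $S_n(x)=\sum_{k=0}^n s_{n,k}x^k$, and the formal power series $S_{n,k}(x)=S_n(x)(x+1)^{k-n}=S_n(x)\sum_{\nu\ge0}\binom{k-n}{\nu}x^\nu$ (generalized binomial coefficients, also used in $\binom{2k-n}{k-\nu}$). $[x^k]$ denotes the coefficient of $x^k$. Let $d_n=\lfloor n/2\rfloor$, $\delta_n=1$ if $n$ odd, $0$ otherwise. Under (R), for each $n$ there is a unique polynomial $F_n(u)=\sum_{k\ge0}f_{n,k}u^k$ of degree at most $d_n$ with $A_n(x)=(2x-1)^{\delta_n}F_n(x(x-1))$ (explicitly $f_{n,k}=2^{2k-n}\sum_{\nu=0}^{d_n-k}\binom{n}{2\nu}\binom{d_n-\nu}{k}S_{2\nu}(1)$ for $k\le d_n$), with $f_{n,k}=0$ for $k>d_n$. *)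

theory Defs
  imports "HOL-Analysis.Analysis" "HOL-Computational_Algebra.Computational_Algebra"
begin

definition appell :: "(nat \<Rightarrow> complex) \<Rightarrow> nat \<Rightarrow> complex \<Rightarrow> complex" where
  "appell \<alpha> n x = (\<Sum>\<nu>\<le>n. of_nat (n choose \<nu>) * \<alpha> (n - \<nu>) * x ^ \<nu>)"

definition propR :: "(nat \<Rightarrow> complex) \<Rightarrow> bool" where
  "propR \<alpha> \<longleftrightarrow> (\<forall>n x. appell \<alpha> n (1 - x) = (-1) ^ n * appell \<alpha> n x)"

definition appell_star :: "(nat \<Rightarrow> complex) \<Rightarrow> nat \<Rightarrow> int \<Rightarrow> complex \<Rightarrow> complex" where
  "appell_star \<alpha> n k x = x powi k * appell \<alpha> n (inverse x)"

definition s_coef :: "(nat \<Rightarrow> complex) \<Rightarrow> nat \<Rightarrow> nat \<Rightarrow> complex" where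
  "s_coef \<alpha> n k = (\<Sum>\<nu>=k..n. of_nat (n choose \<nu>) * of_nat (\<nu> choose k) * \<alpha> \<nu>)"

definition S_poly :: "(nat \<Rightarrow> complex) \<Rightarrow> nat \<Rightarrow> complex poly" where
  "S_poly \<alpha> n = (\<Sum>k\<le>n. monom (s_coef \<alpha> n k) k)"

text \<open>S_{n,k}(x) = S_n(x) (1+x)^(k-n) as a formal power series
  (fps_binomial a = sum of (a gchoose j) X^j).\<close>
definition S_fps :: "(nat \<Rightarrow> complex) \<Rightarrow> nat \<Rightarrow> int \<Rightarrow> complex fps" where
  "S_fps \<alpha> n k = fps_of_poly (S_poly \<alpha> n) * fps_binomial (of_int (k - int n))"

definition F_pol :: "(nat \<Rightarrow> complex) \<Rightarrow> nat \<Rightarrow> complex poly" where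
  "F_pol \<alpha> n = (THE p. degree p \<le> n div 2 \<and>
     (\<forall>x. appell \<alpha> n x = (2 * x - 1) ^ (n mod 2) * poly p (x * (x - 1))))"

definition f_coef :: "(nat \<Rightarrow> complex) \<Rightarrow> nat \<Rightarrow> nat \<Rightarrow> complex" where
  "f_coef \<alpha> n k = coeff (F_pol \<alpha> n) k"

end

theory Submission
  imports Defs
begin


definition Ap :: "(nat \<Rightarrow> complex) \<Rightarrow> nat \<Rightarrow> complex poly" where
  "Ap \<alpha> n = (\<Sum>\<nu>\<le>n. monom (of_nat (n choose \<nu>) * \<alpha> (n - \<nu>)) \<nu>)"

lemma poly_Ap: "poly (Ap \<alpha> n) x = appell \<alpha> n x"
  by (simp add: Ap_def appell_def poly_sum poly_monom)

lemma coeff_Ap: "coeff (Ap \<alpha> n) i = (if i \<le> n then of_nat (n choose i) * \<alpha> (n - i) else 0)"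
  by (simp add: Ap_def coeff_sum coeff_monom)

definition UU :: "complex poly" where "UU = [:0,-1,1:]"
definition LL :: "complex poly" where "LL = [:-1,2:]"

lemma poly_UU: "poly UU x = x * (x - 1)" by (simp add: UU_def algebra_simps)
lemma poly_LL: "poly LL x = 2 * x - 1" by (simp add: LL_def algebra_simps)
lemma degree_UU: "degree UU = 2" by (simp add: UU_def)

lemma pcompose_inj:
  fixes p q :: "complex poly"
  assumes "pcompose p UU = pcompose q UU" shows "p = q"
proof -
  have "pcompose (p - q) UU = 0" using assms by (simp add: pcompose_diff)
  then show ?thesis using pcompose_eq_0[of "p - q" UU] degree_UU by simp
qed

lemma poly_eqI_fun: fixes p q :: "complex poly" assumes "\<And>x. poly p x = poly q x" shows "p = q"
  using assms poly_eq_poly_eq_iff by blast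

definition refl1 :: "complex poly" where "refl1 = [:1,-1:]"
lemma poly_refl1: "poly refl1 x = 1 - x" by (simp add: refl1_def)

lemma sym_UU: "pcompose UU refl1 = UU"
  by (rule poly_eqI_fun) (simp add: poly_pcompose poly_UU poly_refl1 algebra_simps)

lemma sym_decomp:
  fixes P :: "complex poly"
  assumes "pcompose P refl1 = P"
  shows "\<exists>F. P = pcompose F UU"
  using assms
proof (induction "degree P" arbitrary: P rule: less_induct)
  case less
  define Q where "Q = P div UU"
  define R where "R = P mod UU"
  have UU0: "UU \<noteq> 0" by (simp add: UU_def)
  have PQR: "P = Q * UU + R" by (simp add: Q_def R_def)
  have degR: "degree R < 2" using degree_mod_less'[OF UU0, of P] degree_UU
    by (metis R_def UU0 degree_0 degree_mod_less' less_2_cases_iff less_nat_zero_code pos2)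
  have Rform: "R = [:coeff R 0, coeff R 1:]"
    by (rule poly_eqI) (use degR in \<open>auto simp: coeff_pCons coeff_eq_0 split: nat.splits\<close>)
  have U0: "poly UU 0 = 0" "poly UU 1 = 0" by (simp_all add: poly_UU)
  have "poly P 1 = poly P 0"
    using arg_cong[OF less.prems, of "\<lambda>p. poly p 0"] by (simp add: poly_pcompose poly_refl1)
  hence "poly R 1 = poly R 0" using PQR U0 by (metis add_0 mult_zero_right poly_add poly_mult)
  hence c1: "coeff R 1 = 0" by (subst (asm) (1 2) Rform) simp
  hence "R = [:coeff R 0, 0:]" using Rform by metis
  hence Rc: "R = [:coeff R 0:]" by (metis pCons_0_0)
  have "pcompose P refl1 = pcompose Q refl1 * UU + R"
  proof -
    have "pcompose R refl1 = R" by (metis Rc pcompose_const)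
    thus ?thesis by (subst PQR) (simp add: pcompose_add pcompose_mult sym_UU)
  qed
  hence "pcompose Q refl1 * UU = Q * UU" using less.prems PQR by simp
  hence Qs: "pcompose Q refl1 = Q" using UU0 by simp
  show ?case
  proof (cases "Q = 0")
    case True
    then show ?thesis using PQR Rc by (intro exI[of _ "[:coeff R 0:]"]) (metis add_0 mult_zero_left pcompose_const)
  next
    case False
    have "degree P = degree Q + 2" using PQR False UU0 degree_UU
    proof -
      have "degree (Q * UU) = degree Q + 2" using False UU0 degree_UU by (simp add: degree_mult_eq)
      moreover have "degree R = 0" using Rc by (metis degree_pCons_0)
      ultimately have "degree (Q * UU + R) = degree (Q * UU)" by (intro degree_add_eq_left) simp
      thus ?thesis using PQR \<open>degree (Q * UU) = degree Q + 2\<close> by simp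
    qed
    then obtain G where "Q = pcompose G UU" using less.hyps[of Q] Qs by auto
    then show ?thesis using PQR Rc
      by (intro exI[of _ "pCons (coeff R 0) G"]) (simp add: pcompose_pCons algebra_simps)
  qed
qed



lemma degree_Ap: "degree (Ap \<alpha> n) \<le> n"
  by (rule degree_le) (simp add: coeff_Ap)

lemma Ap_sym: assumes "propR \<alpha>" shows "pcompose (Ap \<alpha> m) refl1 = smult ((-1)^m) (Ap \<alpha> m)"
  by (rule poly_eqI_fun) (use assms in \<open>simp add: poly_pcompose poly_refl1 poly_Ap propR_def\<close>)

lemma degree_pcompose_UU: "degree (pcompose F UU) = 2 * degree F"
  by (simp add: degree_pcompose degree_UU)

lemma exists_even:
  assumes "propR \<alpha>" "even m"
  shows "\<exists>F. degree F \<le> m div 2 \<and> Ap \<alpha> m = pcompose F UU"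
proof -
  have "pcompose (Ap \<alpha> m) refl1 = Ap \<alpha> m" using Ap_sym[OF assms(1), of m] assms(2) by simp
  then obtain F where F: "Ap \<alpha> m = pcompose F UU" using sym_decomp by blast
  have "2 * degree F \<le> m" using degree_Ap[of \<alpha> m] F degree_pcompose_UU by metis
  thus ?thesis using F by (intro exI[of _ F]) auto
qed

lemma exists_odd:
  assumes "propR \<alpha>" "odd m"
  shows "\<exists>F. degree F \<le> m div 2 \<and> Ap \<alpha> m = LL * pcompose F UU"
proof -
  have S: "pcompose (Ap \<alpha> m) refl1 = - Ap \<alpha> m" using Ap_sym[OF assms(1), of m] assms(2) by simp
  have "poly (Ap \<alpha> m) (1/2) = - poly (Ap \<alpha> m) (1/2)"
    using arg_cong[OF S, of "\<lambda>p. poly p (1/2)"] by (simp add: poly_pcompose poly_refl1)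
  hence "poly (Ap \<alpha> m) (1/2) = 0" by simp
  then obtain B0 where B0: "Ap \<alpha> m = [:-(1/2), 1:] * B0" using poly_eq_0_iff_dvd by (metis dvdE)
  define B where "B = smult (1/2) B0"
  have AB: "Ap \<alpha> m = LL * B" unfolding B_def LL_def B0 by (rule poly_eqI_fun) (simp add: algebra_simps)
  have LL0: "LL \<noteq> 0" by (simp add: LL_def)
  have "pcompose LL refl1 = - LL"
    by (rule poly_eqI_fun) (simp add: poly_pcompose poly_LL poly_refl1 algebra_simps)
  hence "- LL * pcompose B refl1 = - (LL * B)" using S AB by (simp add: pcompose_mult)
  hence "pcompose B refl1 = B" using LL0 by simp
  then obtain F where F: "B = pcompose F UU" using sym_decomp by blast
  have "degree B + 1 \<le> m"
  proof (cases "B = 0")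
    case True thus ?thesis using assms(2) by (simp add: odd_pos Suc_leI)
  next
    case False
    hence "degree (LL * B) = degree LL + degree B" using LL0 by (intro degree_mult_eq) auto
    hence "degree (Ap \<alpha> m) = 1 + degree B" using AB by (simp add: LL_def)
    thus ?thesis using degree_Ap[of \<alpha> m] by simp
  qed
  hence "2 * degree F + 1 \<le> m" using F degree_pcompose_UU by metis
  hence "degree F \<le> m div 2" using assms(2) by linarith
  thus ?thesis using AB F by blast
qed

lemma F_pol_char:
  assumes "degree F \<le> n div 2" "\<And>x. appell \<alpha> n x = (2 * x - 1) ^ (n mod 2) * poly F (x * (x - 1))"
  shows "F_pol \<alpha> n = F"
  unfolding F_pol_def
proof (rule the_equality)
  show "degree F \<le> n div 2 \<and> (\<forall>x. appell \<alpha> n x = (2 * x - 1) ^ (n mod 2) * poly F (x * (x - 1)))"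
    using assms by blast
next
  fix p assume p: "degree p \<le> n div 2 \<and> (\<forall>x. appell \<alpha> n x = (2 * x - 1) ^ (n mod 2) * poly p (x * (x - 1)))"
  have "LL ^ (n mod 2) * pcompose p UU = LL ^ (n mod 2) * pcompose F UU"
  proof (rule poly_eqI_fun)
    fix x
    have "poly (LL ^ (n mod 2) * pcompose p UU) x = appell \<alpha> n x"
      using p by (simp add: poly_pcompose poly_UU poly_LL)
    moreover have "poly (LL ^ (n mod 2) * pcompose F UU) x = appell \<alpha> n x"
      using assms(2) by (simp add: poly_pcompose poly_UU poly_LL)
    ultimately show "poly (LL ^ (n mod 2) * pcompose p UU) x = poly (LL ^ (n mod 2) * pcompose F UU) x"
      by simp
  qed
  hence "pcompose p UU = pcompose F UU" by (simp add: LL_def)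
  thus "p = F" by (rule pcompose_inj)
qed



lemma fps_const_sum': "fps_const (sum f A) = (\<Sum>x\<in>A. fps_const (f x))"
  by (induction A rule: infinite_finite_induct) (simp_all flip: fps_const_add)

definition ev :: "complex poly \<Rightarrow> complex fps \<Rightarrow> complex fps" where
  "ev P z = poly (map_poly fps_const P) z"

lemma map_poly_fps_mult: "map_poly fps_const (p * q) = map_poly fps_const p * map_poly fps_const (q :: complex poly)"
  by (intro poly_eqI) (simp add: coeff_map_poly coeff_mult fps_const_sum')

lemma map_poly_fps_add: "map_poly fps_const (p + q) = map_poly fps_const p + map_poly fps_const (q :: complex poly)"
  by (intro poly_eqI) (simp add: coeff_map_poly)

lemma ev_mult: "ev (p * q) z = ev p z * ev q z"
  by (simp add: ev_def map_poly_fps_mult)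

lemma ev_add: "ev (p + q) z = ev p z + ev q z"
  by (simp add: ev_def map_poly_fps_add)

lemma ev_0 [simp]: "ev 0 z = 0" by (simp add: ev_def)

lemma ev_pCons: "ev (pCons a p) z = fps_const a + z * ev p z"
  by (simp add: ev_def map_poly_pCons)

lemma ev_const: "ev [:a:] z = fps_const a"
  by (simp add: ev_pCons)

lemma ev_monom: "ev (monom c n) z = fps_const c * z ^ n"
  by (simp add: ev_def map_poly_monom poly_monom)

lemma ev_sum: "ev (sum f A) z = (\<Sum>x\<in>A. ev (f x) z)"
  by (induction A rule: infinite_finite_induct) (simp_all add: ev_add)

lemma ev_pcompose: "ev (pcompose p q) z = ev p (ev q z)"
proof (induction p rule: pCons_induct)
  case 0 then show ?case by simp
next
  case (pCons a p)
  then show ?case by (simp add: pcompose_pCons ev_add ev_mult ev_const ev_pCons)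
qed

lemma ev_altdef: "ev p z = (\<Sum>i\<le>degree p. fps_const (coeff p i) * z ^ i)"
proof -
  have "ev p z = ev (\<Sum>i\<le>degree p. monom (coeff p i) i) z" by (simp add: poly_as_sum_of_monoms)
  also have "\<dots> = (\<Sum>i\<le>degree p. fps_const (coeff p i) * z ^ i)" by (simp add: ev_sum ev_monom)
  finally show ?thesis .
qed

lemma ev_X: "ev p fps_X = fps_of_poly p"
proof -
  have "fps_of_poly p = fps_of_poly (\<Sum>i\<le>degree p. monom (coeff p i) i)" by (simp add: poly_as_sum_of_monoms)
  also have "\<dots> = (\<Sum>i\<le>degree p. fps_const (coeff p i) * fps_X ^ i)" by (simp add: fps_of_poly_sum fps_of_poly_monom)
  finally show ?thesis by (simp add: ev_altdef)
qed

lemma ev_LL: "ev LL z = 2 * z - 1"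
  by (simp add: LL_def ev_pCons numeral_fps_const algebra_simps)

lemma ev_UU: "ev UU z = z * (z - 1)"
  by (simp add: UU_def ev_pCons algebra_simps flip: fps_const_neg)

lemma ev_Ap: "ev (Ap \<alpha> n) z = (\<Sum>\<nu>\<le>n. fps_const (of_nat (n choose \<nu>) * \<alpha> (n - \<nu>)) * z ^ \<nu>)"
  by (simp add: Ap_def ev_sum ev_monom)

lemma ev_rel: assumes "Ap \<alpha> n = LL * pcompose F UU"
  shows "ev (Ap \<alpha> n) z = (2 * z - 1) * (\<Sum>j\<le>degree F. fps_const (coeff F j) * (z * (z - 1)) ^ j)"
  by (simp add: assms ev_mult ev_pcompose ev_LL ev_UU ev_altdef[of F])



lemma coeff_S_poly: "coeff (S_poly \<alpha> n) i = s_coef \<alpha> n i"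
proof (cases "i \<le> n")
  case True thus ?thesis by (simp add: S_poly_def coeff_sum coeff_monom)
next
  case False thus ?thesis by (simp add: S_poly_def coeff_sum coeff_monom s_coef_def)
qed

lemma LS: "fps_of_poly (S_poly \<alpha> n) = (\<Sum>j\<le>n. fps_const (of_nat (n choose j) * \<alpha> j) * fps_binomial (of_nat j))"
proof (rule fps_ext)
  fix i
  have R: "(\<Sum>j\<le>n. fps_const (of_nat (n choose j) * \<alpha> j) * fps_binomial (of_nat j)) $ i
      = (\<Sum>j\<le>n. of_nat (n choose j) * \<alpha> j * of_nat (j choose i))"
    by (simp add: fps_sum_nth binomial_gbinomial)
  show "fps_of_poly (S_poly \<alpha> n) $ i = (\<Sum>j\<le>n. fps_const (of_nat (n choose j) * \<alpha> j) * fps_binomial (of_nat j)) $ i"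
  proof (cases "i \<le> n")
    case True
    have "(\<Sum>j\<le>n. of_nat (n choose j) * \<alpha> j * of_nat (j choose i)) = (\<Sum>j=i..n. of_nat (n choose j) * \<alpha> j * (of_nat (j choose i) :: complex))"
      by (rule sum.mono_neutral_right) auto
    thus ?thesis unfolding R by (simp add: coeff_S_poly s_coef_def mult_ac)
  next
    case False
    hence "(\<Sum>j\<le>n. of_nat (n choose j) * \<alpha> j * of_nat (j choose i)) = (0::complex)"
      by (intro sum.neutral) auto
    thus ?thesis unfolding R using False by (simp add: coeff_S_poly s_coef_def)
  qed
qed

abbreviation aa :: "(nat \<Rightarrow> complex) \<Rightarrow> nat \<Rightarrow> nat \<Rightarrow> complex" where
  "aa \<alpha> n \<nu> \<equiv> of_nat (n choose \<nu>) * \<alpha> (n - \<nu>)"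

lemma S_fps_sum: "S_fps \<alpha> n m = (\<Sum>\<nu>\<le>n. fps_const (aa \<alpha> n \<nu>) * fps_binomial (of_int m - of_nat \<nu>))"
proof -
  have "S_fps \<alpha> n m = (\<Sum>j\<le>n. fps_const (of_nat (n choose j) * \<alpha> j) * (fps_binomial (of_nat j) * fps_binomial (of_int (m - int n))))"
    by (simp add: S_fps_def LS sum_distrib_right sum_distrib_left mult_ac)
  also have "\<dots> = (\<Sum>j\<le>n. fps_const (of_nat (n choose j) * \<alpha> j) * fps_binomial (of_int m - of_nat (n - j)))"
    by (intro sum.cong refl) (simp add: fps_binomial_add_mult[symmetric] of_nat_diff algebra_simps)
  also have "\<dots> = (\<Sum>j=0..n. fps_const (of_nat (n choose j) * \<alpha> j) * fps_binomial (of_int m - of_nat (n - j)))"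
    by (simp add: atMost_atLeast0)
  also have "\<dots> = (\<Sum>\<nu>=0..n. fps_const (of_nat (n choose (n - \<nu>)) * \<alpha> (n - \<nu>)) * fps_binomial (of_int m - of_nat (n - (n - \<nu>))))"
    by (subst sum.atLeastAtMost_rev) simp
  also have "\<dots> = (\<Sum>\<nu>\<le>n. fps_const (aa \<alpha> n \<nu>) * fps_binomial (of_int m - of_nat \<nu>))"
    by (simp add: atMost_atLeast0 binomial_symmetric[symmetric])
  finally show ?thesis .
qed

lemma B_ev: "fps_binomial (of_int m) * ev (Ap \<alpha> n) (fps_binomial (-1)) = (\<Sum>\<nu>\<le>n. fps_const (aa \<alpha> n \<nu>) * fps_binomial (of_int m - of_nat \<nu>))"
proof -
  have "fps_binomial (of_int m) * ev (Ap \<alpha> n) (fps_binomial (-1)) = (\<Sum>\<nu>\<le>n. fps_const (aa \<alpha> n \<nu>) * (fps_binomial (of_int m) * fps_binomial (of_nat \<nu> * -1)))"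
    by (simp add: ev_Ap sum_distrib_left fps_binomial_power mult_ac)
  also have "\<dots> = (\<Sum>\<nu>\<le>n. fps_const (aa \<alpha> n \<nu>) * fps_binomial (of_int m - of_nat \<nu>))"
    by (simp add: fps_binomial_add_mult[symmetric])
  finally show ?thesis .
qed

lemma S_fps_ev: "S_fps \<alpha> n m = fps_binomial (of_int m) * ev (Ap \<alpha> n) (fps_binomial (-1))"
  by (simp add: S_fps_sum B_ev)



lemma neg1pow: "(-1 :: complex fps) ^ j = fps_const ((-1) ^ j)"
  by (induction j) (simp_all flip: fps_const_neg fps_const_mult)

lemma omX: "((1 - fps_X) * G) $ t = G $ t - (if t = 0 then 0 else G $ (t - 1 :: nat))"
  for G :: "complex fps" by (simp add: left_diff_distrib)

lemma val_b: "((2 * of_nat t - 1 :: complex) gchoose t) - (if t = 0 then 0 else (2 * of_nat t - 1 :: complex) gchoose (t - 1)) = (if t = 0 then 1 else 0)"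
proof (cases "t = 0")
  case True thus ?thesis by simp
next
  case False
  have e: "(2 * of_nat t - 1 :: complex) = of_nat (2*t - 1)" using False by (simp add: of_nat_diff)
  have s: "(2*t - 1) choose t = (2*t - 1) choose (t - 1)"
    using False by (subst binomial_symmetric) (auto simp: algebra_simps)
  have "((2 * of_nat t - 1 :: complex) gchoose t) - ((2 * of_nat t - 1 :: complex) gchoose (t - 1)) = 0"
  proof -
    have a: "(of_nat (2*t - 1) :: complex) gchoose t = of_nat ((2*t - 1) choose t)" by (rule binomial_gbinomial[symmetric])
    have b: "(of_nat (2*t - 1) :: complex) gchoose (t - 1) = of_nat ((2*t - 1) choose (t - 1))" by (rule binomial_gbinomial[symmetric])
    show ?thesis by (simp only: e a b s diff_self)
  qed
  thus ?thesis using False by (simp only: if_False)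
qed

lemma sum_delta_coeff: "(\<Sum>j\<le>degree F. (if j = k then c * coeff F j else 0)) = c * coeff F k"
  for F :: "complex poly"
  by (cases "k \<le> degree F") (auto simp: coeff_eq_0)

lemma core_b:
  assumes rel: "Ap \<alpha> n = LL * pcompose F UU"
  shows "(S_fps \<alpha> n (2 * int k)) $ k = (-1)^k * coeff F k"
proof -
  define z where "z = fps_binomial (-1 :: complex)"
  define X where "X = (fps_X :: complex fps)"
  have zX: "z * (1 + X) = 1"
    unfolding z_def X_def by (simp flip: fps_binomial_1 fps_binomial_add_mult)
  have z1: "z - 1 = - (X * z)"
  proof -
    have "z - 1 = z - z * (1 + X)" using zX by simp
    thus ?thesis by (simp add: algebra_simps)
  qed
  have z2: "2 * z - 1 = z * (1 - X)" using z1 by (simp add: algebra_simps)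
  have zz: "z * (z - 1) = - (X * z^2)" unfolding z1 by (simp add: power2_eq_square mult_ac)
  define c where "c = (\<lambda>j::nat. (of_int (2 * int k) - of_nat (2*j+1) :: complex))"
  have T: "fps_binomial (of_int (2 * int k)) * ((2 * z - 1) * (z * (z - 1)) ^ j)
        = fps_const ((-1)^j) * (X ^ j * ((1 - X) * fps_binomial (c j)))" for j
  proof -
    have "fps_binomial (of_int (2 * int k)) * ((2 * z - 1) * (z * (z - 1)) ^ j)
        = (-1)^j * (X ^ j * ((1 - X) * (fps_binomial (of_int (2 * int k)) * z ^ (2*j+1))))"
    proof -
      have p1: "(- (X * z^2))^j = (-1)^j * (X^j * z^(2*j))"
      proof -
        have "(X * z^2)^j = X^j * z^(2*j)" by (simp add: power_mult_distrib power_mult)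
        thus ?thesis by (simp only: power_minus[of "X * z^2"])
      qed
      have p2: "z ^ (2*j+1) = z * z^(2*j)" by simp
      show ?thesis unfolding z2 zz p1 p2 by (simp only: mult_ac)
    qed
    also have "fps_binomial (of_int (2 * int k)) * z ^ (2*j+1) = fps_binomial (c j)"
      unfolding z_def c_def fps_binomial_power by (simp flip: fps_binomial_add_mult; simp add: algebra_simps)
    finally show ?thesis by (simp add: neg1pow)
  qed
  have "S_fps \<alpha> n (2 * int k) = fps_binomial (of_int (2 * int k)) * ev (Ap \<alpha> n) z"
    by (simp add: S_fps_ev z_def)
  also have "\<dots> = (\<Sum>j\<le>degree F. fps_const (coeff F j) * (fps_binomial (of_int (2 * int k)) * ((2 * z - 1) * (z * (z - 1)) ^ j)))"
    by (simp add: ev_rel[OF rel] sum_distrib_left mult_ac)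
  also have "\<dots> = (\<Sum>j\<le>degree F. fps_const (coeff F j * (-1)^j) * (X ^ j * ((1 - X) * fps_binomial (c j))))"
    by (intro sum.cong refl) (simp only: T mult.assoc fps_const_mult[symmetric])
  finally have E: "S_fps \<alpha> n (2 * int k) $ k = (\<Sum>j\<le>degree F. coeff F j * (-1)^j * (X ^ j * ((1 - X) * fps_binomial (c j))) $ k)"
    by (simp add: fps_sum_nth)
  have "coeff F j * (-1)^j * (X ^ j * ((1 - X) * fps_binomial (c j))) $ k = (if j = k then (-1)^k * coeff F j else 0)" for j
  proof (cases "j \<le> k")
    case False thus ?thesis by (simp add: X_def fps_X_power_mult_nth)
  next
    case True
    define t where "t = k - j"
    have kt: "k = j + t" using True t_def by simp
    have cj: "c j = 2 * of_nat t - 1" unfolding c_def kt by simp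
    have "(X ^ j * ((1 - X) * fps_binomial (c j))) $ k = (if t = 0 then 1 else 0)"
    proof -
      have "(X ^ j * ((1 - X) * fps_binomial (c j))) $ k = ((1 - X) * fps_binomial (c j)) $ t"
        unfolding X_def fps_X_power_mult_nth kt by simp
      also have "\<dots> = (c j gchoose t) - (if t = 0 then 0 else c j gchoose (t - 1))"
        unfolding X_def omX by simp
      also have "\<dots> = (if t = 0 then 1 else 0)" unfolding cj by (rule val_b)
      finally show ?thesis .
    qed
    thus ?thesis using kt by auto
  qed
  hence "S_fps \<alpha> n (2 * int k) $ k = (\<Sum>j\<le>degree F. (if j = k then (-1)^k * coeff F j else 0))"
    unfolding E by simp
  thus ?thesis by (simp add: sum_delta_coeff)
qed



definition EE :: "complex \<Rightarrow> complex fps" where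
  "EE a = Abs_fps (\<lambda>t. (-1)^t * (a gchoose t))"

lemma EE_nth [simp]: "EE a $ t = (-1)^t * (a gchoose t)"
  by (simp add: EE_def)

lemma EE_add: "EE (a + b) = EE a * EE b"
proof (rule fps_ext)
  fix t
  have "(EE a * EE b) $ t = (\<Sum>i=0..t. (-1)^t * ((a gchoose i) * (b gchoose (t - i))))"
    unfolding fps_mult_nth
  proof (intro sum.cong refl)
    fix i assume "i \<in> {0..t}"
    hence "(-1::complex)^i * (-1)^(t - i) = (-1)^t" by (simp flip: power_add)
    thus "EE a $ i * EE b $ (t - i) = (-1)^t * ((a gchoose i) * (b gchoose (t - i)))"
      by (simp add: mult_ac)
  qed
  also have "\<dots> = (-1)^t * ((a + b) gchoose t)"
    by (simp add: gbinomial_Vandermonde flip: sum_distrib_left)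
  finally show "EE (a + b) $ t = (EE a * EE b) $ t" by simp
qed

lemma EE_0: "EE 0 = 1"
  by (rule fps_ext) (simp add: gbinomial_0_left)

lemma EE_1: "EE 1 = 1 - fps_X"
proof (rule fps_ext)
  fix t
  show "EE 1 $ t = (1 - fps_X :: complex fps) $ t"
  proof (cases t)
    case 0 thus ?thesis by simp
  next
    case (Suc m)
    show ?thesis
    proof (cases m)
      case 0 thus ?thesis using Suc by simp
    next
      case (Suc m')
      have "(1::complex) gchoose t = of_nat (1 choose t)" by (metis binomial_gbinomial of_nat_1)
      also have "1 choose t = 0" using Suc \<open>t = Suc m\<close> by simp
      finally show ?thesis using Suc \<open>t = Suc m\<close> by simp
    qed
  qed
qed

lemma EE_pow: "EE 1 ^ j = EE (of_nat j)"
  by (induction j) (simp_all add: EE_0 EE_add[symmetric] algebra_simps)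

lemma EE_neg: assumes "i \<le> k" shows "EE (-(of_nat k + 1)) $ (k - i) = of_nat ((2*k - i) choose k)"
proof -
  have "EE (-(of_nat k + 1)) $ (k - i) = (-1)^(k-i) * ((-1)^(k-i) * ((of_nat (k - i) - (-(of_nat k + 1)) - 1) gchoose (k - i)))"
    by (subst gbinomial_negated_upper) simp
  also have "(of_nat (k - i) - (-(of_nat k + 1)) - 1 :: complex) = of_nat (2*k - i)"
    using assms by (simp add: of_nat_diff)
  also have "(-1::complex)^(k-i) * ((-1)^(k-i) * (of_nat (2*k - i) gchoose (k - i))) = of_nat (2*k - i) gchoose (k - i)"
    by (simp flip: mult.assoc power_add)
  also have "\<dots> = of_nat ((2*k - i) choose (k - i))" by (simp add: binomial_gbinomial)
  also have "(2*k - i) choose (k - i) = (2*k - i) choose k"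
    using assms by (subst binomial_symmetric) auto
  finally show ?thesis .
qed

lemma val_d: "EE (-(of_nat t + 1)) $ t - 2 * EE (-(of_nat t)) $ t = (if t = 0 then -1 else 0)"
proof (cases t)
  case 0 thus ?thesis by simp
next
  case (Suc u)
  have a: "EE (-(of_nat t + 1)) $ t = of_nat ((2*t) choose t)"
    using EE_neg[of 0 t] by simp
  have "EE (-(of_nat t)) $ t = (-1)^t * ((-1)^t * ((of_nat t - (-(of_nat t)) - 1) gchoose t))"
    by (subst gbinomial_negated_upper) simp
  also have "(of_nat t - (-(of_nat t)) - 1 :: complex) = of_nat (2*u+1)" using Suc by simp
  also have "(-1::complex)^t * ((-1)^t * (of_nat (2*u+1) gchoose t)) = of_nat (2*u+1) gchoose t"
    by (simp flip: mult.assoc power_add)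
  also have "\<dots> = of_nat ((2*u+1) choose t)" by (simp add: binomial_gbinomial)
  finally have b: "EE (-(of_nat t)) $ t = of_nat ((2*u+1) choose t)" .
  have "(2*t) choose t = ((2*u+1) choose u) + ((2*u+1) choose t)"
    using Suc by simp
  also have "(2*u+1) choose u = (2*u+1) choose t"
    using Suc by (subst binomial_symmetric) auto
  finally have "(2*t) choose t = 2 * ((2*u+1) choose t)" by simp
  hence "(of_nat ((2*t) choose t) :: complex) = 2 * of_nat ((2*u+1) choose t)" by (metis of_nat_mult of_nat_numeral)
  thus ?thesis using a b Suc by simp
qed

lemma core_d:
  assumes rel: "Ap \<alpha> n = LL * pcompose F UU" and kn: "k \<le> n"
  shows "(\<Sum>\<nu>\<le>k. of_nat ((2 * k - \<nu>) choose k) * of_nat (n choose \<nu>) * \<alpha> (n - \<nu>)) = - ((-1)^k * coeff F k)"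
proof -
  define X where "X = (fps_X :: complex fps)"
  define G where "G = EE (-(of_nat k + 1))"
  have "(fps_of_poly (Ap \<alpha> n) * G) $ k = (\<Sum>i=0..k. coeff (Ap \<alpha> n) i * G $ (k - i))"
    by (simp add: fps_mult_nth)
  also have "\<dots> = (\<Sum>\<nu>\<le>k. of_nat ((2 * k - \<nu>) choose k) * of_nat (n choose \<nu>) * \<alpha> (n - \<nu>))"
    unfolding atMost_atLeast0
  proof (intro sum.cong refl)
    fix i assume "i \<in> {0..k}"
    hence i: "i \<le> k" by simp
    have "G $ (k - i) = of_nat ((2*k - i) choose k)" unfolding G_def using i by (rule EE_neg)
    thus "coeff (Ap \<alpha> n) i * G $ (k - i) = of_nat ((2 * k - i) choose k) * of_nat (n choose i) * \<alpha> (n - i)"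
      using i kn by (simp add: coeff_Ap)
  qed
  finally have L: "(fps_of_poly (Ap \<alpha> n) * G) $ k = (\<Sum>\<nu>\<le>k. of_nat ((2 * k - \<nu>) choose k) * of_nat (n choose \<nu>) * \<alpha> (n - \<nu>))" .
  have X1: "X - 1 = - EE 1" by (simp add: EE_1 X_def)
  have X2: "2 * X - 1 = 1 - 2 * EE 1" by (simp add: EE_1 X_def algebra_simps)
  have TT: "(2 * X - 1) * ((X * (X - 1)) ^ j * G)
      = fps_const ((-1)^j) * (X ^ j * (EE (of_nat j - (of_nat k + 1)) - 2 * EE (of_nat j - of_nat k)))" for j
  proof -
    have p1: "(X * (X - 1))^j = (-1)^j * (X^j * EE (of_nat j))"
    proof -
      have "(X * EE 1)^j = X^j * EE (of_nat j)" by (simp add: power_mult_distrib EE_pow)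
      thus ?thesis unfolding X1 by (simp only: mult_minus_right power_minus[of "X * EE 1"])
    qed
    have p3: "(1 - 2 * EE 1) * EE (of_nat j) * G = EE (of_nat j - (of_nat k + 1)) - 2 * EE (of_nat j - of_nat k)"
    proof -
      have "EE (of_nat j) * G = EE (of_nat j - (of_nat k + 1))" unfolding G_def by (simp flip: EE_add) (simp add: algebra_simps)
      moreover have "EE 1 * EE (of_nat j) * G = EE (of_nat j - of_nat k)" unfolding G_def
        by (simp flip: EE_add)
      ultimately show ?thesis by (simp add: algebra_simps)
    qed
    show ?thesis unfolding X2 p1 neg1pow[symmetric] using p3 by (simp add: mult_ac)
  qed
  have "fps_of_poly (Ap \<alpha> n) * G = (\<Sum>j\<le>degree F. fps_const (coeff F j) * ((2 * X - 1) * ((X * (X - 1)) ^ j * G)))"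
    unfolding ev_X[symmetric] ev_rel[OF rel] X_def by (simp add: sum_distrib_left sum_distrib_right mult_ac)
  also have "\<dots> = (\<Sum>j\<le>degree F. fps_const (coeff F j * (-1)^j) * (X ^ j * (EE (of_nat j - (of_nat k + 1)) - 2 * EE (of_nat j - of_nat k))))"
    by (intro sum.cong refl) (simp only: TT mult.assoc fps_const_mult[symmetric])
  finally have E: "(fps_of_poly (Ap \<alpha> n) * G) $ k = (\<Sum>j\<le>degree F. coeff F j * (-1)^j * (X ^ j * (EE (of_nat j - (of_nat k + 1)) - 2 * EE (of_nat j - of_nat k))) $ k)"
    by (simp add: fps_sum_nth)
  have "coeff F j * (-1)^j * (X ^ j * (EE (of_nat j - (of_nat k + 1)) - 2 * EE (of_nat j - of_nat k))) $ k = (if j = k then - ((-1)^k * coeff F j) else 0)" for j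
  proof (cases "j \<le> k")
    case False thus ?thesis by (simp add: X_def fps_X_power_mult_nth)
  next
    case True
    define t where "t = k - j"
    have kt: "k = j + t" using True t_def by simp
    have c1: "(of_nat j - (of_nat k + 1) :: complex) = -(of_nat t + 1)" unfolding kt by simp
    have c2: "(of_nat j - of_nat k :: complex) = -(of_nat t)" unfolding kt by simp
    have "(X ^ j * (EE (of_nat j - (of_nat k + 1)) - 2 * EE (of_nat j - of_nat k))) $ k = EE (-(of_nat t + 1)) $ t - 2 * EE (-(of_nat t)) $ t"
      unfolding X_def fps_X_power_mult_nth c1 c2 kt by (simp add: numeral_fps_const)
    also have "\<dots> = (if t = 0 then -1 else 0)" by (rule val_d)
    finally show ?thesis using kt by auto
  qed
  hence "(fps_of_poly (Ap \<alpha> n) * G) $ k = (\<Sum>j\<le>degree F. (if j = k then - ((-1)^k) * coeff F j else 0))"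
    unfolding E by simp
  thus ?thesis using L by (simp add: sum_delta_coeff)
qed



lemma hderiv:
  fixes g :: "complex \<Rightarrow> complex" and c :: "nat \<Rightarrow> complex" and e :: "nat \<Rightarrow> int"
  assumes fin: "finite A" and g: "\<And>x. x \<noteq> 0 \<Longrightarrow> g x = (\<Sum>\<nu>\<in>A. c \<nu> * x powi e \<nu>)"
  shows "x \<noteq> 0 \<Longrightarrow> (deriv ^^ j) g x = (\<Sum>\<nu>\<in>A. c \<nu> * (fact j * (of_int (e \<nu>) gchoose j)) * x powi (e \<nu> - int j))"
proof (induction j arbitrary: x)
  case 0 show ?case using g[OF 0] by simp
next
  case (Suc j)
  define h where "h = (\<lambda>x. \<Sum>\<nu>\<in>A. c \<nu> * (fact j * (of_int (e \<nu>) gchoose j)) * x powi (e \<nu> - int j))"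
  have evn: "eventually (\<lambda>y. (deriv^^j) g y = h y) (nhds x)"
  proof -
    have "eventually (\<lambda>y. y \<in> -{0}) (nhds x)"
      using Suc.prems by (intro eventually_nhds_in_open) auto
    thus ?thesis by eventually_elim (use Suc.IH in \<open>auto simp: h_def\<close>)
  qed
  have "(deriv^^Suc j) g x = deriv ((deriv^^j) g) x" by simp
  also have "\<dots> = deriv h x" by (rule deriv_cong_ev[OF evn refl])
  also have "\<dots> = (\<Sum>\<nu>\<in>A. c \<nu> * (fact j * (of_int (e \<nu>) gchoose j)) * (of_int (e \<nu> - int j) * x powi (e \<nu> - int j - 1)))"
    unfolding h_def
    by (rule DERIV_imp_deriv, rule DERIV_sum, rule DERIV_cmult) (rule DERIV_power_int[OF DERIV_ident, simplified], use Suc.prems in simp)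
  also have "\<dots> = (\<Sum>\<nu>\<in>A. c \<nu> * (fact (Suc j) * (of_int (e \<nu>) gchoose Suc j)) * x powi (e \<nu> - int (Suc j)))"
  proof (intro sum.cong refl)
    fix \<nu>
    define a where "a = (of_int (e \<nu>) :: complex)"
    have "(a - of_nat j) * (a gchoose j) = of_nat (Suc j) * (a gchoose Suc j)"
      using gbinomial_mult_1[of a j] by (simp add: algebra_simps)
    hence "fact j * (a gchoose j) * (a - of_nat j) = fact (Suc j) * (a gchoose Suc j)"
      by (simp add: algebra_simps)
    note key = this
    have pw: "e \<nu> - int j - 1 = e \<nu> - int (Suc j)" by simp
    have ofi: "(of_int (e \<nu> - int j) :: complex) = a - of_nat j" by (simp add: a_def)
    have "c \<nu> * (fact j * (a gchoose j)) * ((a - of_nat j) * x powi (e \<nu> - int (Suc j)))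
        = c \<nu> * (fact j * (a gchoose j) * (a - of_nat j)) * x powi (e \<nu> - int (Suc j))"
      by (simp only: mult_ac)
    also have "\<dots> = c \<nu> * (fact (Suc j) * (a gchoose Suc j)) * x powi (e \<nu> - int (Suc j))"
      by (simp only: key)
    finally show "c \<nu> * (fact j * (of_int (e \<nu>) gchoose j)) * (of_int (e \<nu> - int j) * x powi (e \<nu> - int j - 1))
      = c \<nu> * (fact (Suc j) * (of_int (e \<nu>) gchoose Suc j)) * x powi (e \<nu> - int (Suc j))"
      unfolding pw ofi a_def .
  qed
  finally show ?case .
qed

lemma appell_star_sum:
  assumes "x \<noteq> 0"
  shows "appell_star \<alpha> n m x = (\<Sum>\<nu>\<le>n. aa \<alpha> n \<nu> * x powi (m - int \<nu>))"
proof -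
  have "x powi m * inverse x ^ \<nu> = x powi (m - int \<nu>)" for \<nu>
    using assms by (simp add: power_int_diff power_inverse field_simps)
  thus ?thesis unfolding appell_star_def appell_def sum_distrib_left
    by (intro sum.cong refl) (metis (no_types, lifting) mult.assoc mult.left_commute)
qed

lemma deriv_part:
  "(deriv ^^ k) (appell_star \<alpha> n (2 * int k)) 1 / fact k = (S_fps \<alpha> n (2 * int k)) $ k"
proof -
  have "(deriv ^^ k) (appell_star \<alpha> n (2 * int k)) 1 = (\<Sum>\<nu>\<le>n. aa \<alpha> n \<nu> * (fact k * (of_int (2 * int k - int \<nu>) gchoose k)) * 1 powi (2 * int k - int \<nu> - int k))"
    by (rule hderiv[where e = "\<lambda>\<nu>. 2 * int k - int \<nu>"]) (auto simp: appell_star_sum)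
  hence "(deriv ^^ k) (appell_star \<alpha> n (2 * int k)) 1 / fact k = (\<Sum>\<nu>\<le>n. aa \<alpha> n \<nu> * (of_int (2 * int k - int \<nu>) gchoose k))"
    by (simp add: sum_divide_distrib mult.assoc)
  also have "\<dots> = (S_fps \<alpha> n (2 * int k)) $ k"
    by (simp add: S_fps_sum fps_sum_nth)
  finally show ?thesis .
qed



lemma R_eq:
  fixes y :: complex assumes y: "y \<noteq> 0"
  shows "(\<Sum>j\<le>n. of_nat (n choose j) * \<alpha> j * y ^ j) = y ^ n * appell \<alpha> n (inverse y)"
proof -
  have "y ^ n * appell \<alpha> n (inverse y) = (\<Sum>\<nu>\<le>n. of_nat (n choose \<nu>) * \<alpha> (n - \<nu>) * y ^ (n - \<nu>))"
    unfolding appell_def sum_distrib_left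
  proof (intro sum.cong refl)
    fix \<nu> assume "\<nu> \<in> {..n}"
    hence "y ^ n * inverse y ^ \<nu> = y ^ (n - \<nu>)" using y by (simp add: power_diff power_inverse field_simps)
    thus "y ^ n * (of_nat (n choose \<nu>) * \<alpha> (n - \<nu>) * inverse y ^ \<nu>) = of_nat (n choose \<nu>) * \<alpha> (n - \<nu>) * y ^ (n - \<nu>)"
      by (metis (no_types, lifting) mult.assoc mult.left_commute)
  qed
  also have "\<dots> = (\<Sum>\<nu>=0..n. of_nat (n choose \<nu>) * \<alpha> (n - \<nu>) * y ^ (n - \<nu>))"
    by (simp add: atMost_atLeast0)
  also have "\<dots> = (\<Sum>j=0..n. of_nat (n choose (n - j)) * \<alpha> (n - (n - j)) * y ^ (n - (n - j)))"
    by (subst sum.atLeastAtMost_rev) simp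
  also have "\<dots> = (\<Sum>j\<le>n. of_nat (n choose j) * \<alpha> j * y ^ j)"
    by (simp add: atMost_atLeast0 binomial_symmetric[symmetric])
  finally show ?thesis ..
qed

lemma S_poly_alt: "S_poly \<alpha> n = (\<Sum>j\<le>n. smult (of_nat (n choose j) * \<alpha> j) ([:1,1:] ^ j))"
proof -
  have "fps_of_poly (S_poly \<alpha> n) = fps_of_poly (\<Sum>j\<le>n. smult (of_nat (n choose j) * \<alpha> j) ([:1,1:] ^ j))"
    unfolding LS by (simp add: fps_of_poly_sum fps_of_poly_smult fps_of_poly_power fps_of_poly_linear' fps_binomial_of_nat)
  thus ?thesis by (simp only: fps_of_poly_eq_iff)
qed

lemma poly_S: "poly (S_poly \<alpha> n) w = (\<Sum>j\<le>n. of_nat (n choose j) * \<alpha> j * (1 + w) ^ j)"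
  by (simp add: S_poly_alt poly_sum algebra_simps)

lemma pal:
  assumes R: "propR \<alpha>" and odd: "odd n" and kd: "n div 2 < k"
  shows "\<exists>p. fps_of_poly p = S_fps \<alpha> n (2 * int k)
             \<and> (\<forall>x. x \<noteq> 0 \<longrightarrow> poly p x = - (x ^ (2 * k) * poly p (inverse x)))"
proof -
  define m where "m = 2 * k - n"
  have nm: "n + m = 2 * k" and m1: "m \<ge> 1" using kd odd unfolding m_def by (auto elim!: oddE)
  define p where "p = S_poly \<alpha> n * [:1,1:] ^ m"
  have "fps_of_poly p = S_fps \<alpha> n (2 * int k)"
  proof -
    have "(of_int (2 * int k - int n) :: complex) = of_nat m" using nm by (simp add: m_def of_nat_diff)
    thus ?thesis unfolding p_def S_fps_def
      by (simp add: fps_of_poly_mult fps_of_poly_power fps_of_poly_linear' fps_binomial_of_nat)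
  qed
  moreover have pw: "poly p w = (1 + w) ^ (2 * k) * appell \<alpha> n (inverse (1 + w))" if "1 + w \<noteq> 0" for w
  proof -
    have "poly p w = poly (S_poly \<alpha> n) w * (1 + w) ^ m" by (simp add: p_def algebra_simps)
    also have "\<dots> = (1 + w) ^ n * appell \<alpha> n (inverse (1 + w)) * (1 + w) ^ m"
      unfolding poly_S R_eq[OF that] ..
    also have "\<dots> = (1 + w) ^ (2 * k) * appell \<alpha> n (inverse (1 + w))"
    proof -
      have e: "(1 + w) ^ (2 * k) = (1 + w) ^ n * (1 + w) ^ m" by (simp only: nm[symmetric] power_add)
      show ?thesis unfolding e by (simp only: mult_ac)
    qed
    finally show ?thesis .
  qed
  have "poly p x = - (x ^ (2 * k) * poly p (inverse x))" if x: "x \<noteq> 0" for x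
  proof (cases "x = -1")
    case True
    have "poly p (-1) = 0" using m1 by (simp add: p_def)
    thus ?thesis using True by simp
  next
    case False
    define y where "y = 1 + x"
    have y: "y \<noteq> 0" using False unfolding y_def by (metis add.commute add_eq_0_iff)
    have "1 + inverse x = y / x" using x by (simp add: y_def field_simps)
    hence i1: "1 + inverse x \<noteq> 0" and i2: "inverse (1 + inverse x) = 1 - inverse y"
      using x y by (auto simp: y_def field_simps)
    have A: "appell \<alpha> n (1 - inverse y) = - appell \<alpha> n (inverse y)"
      using R odd unfolding propR_def by simp
    have "x ^ (2 * k) * poly p (inverse x) = (x * (1 + inverse x)) ^ (2 * k) * appell \<alpha> n (1 - inverse y)"
      unfolding pw[OF i1] i2 by (simp add: power_mult_distrib)
    also have "x * (1 + inverse x) = y" using x by (simp add: y_def field_simps)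
    finally have "x ^ (2 * k) * poly p (inverse x) = - (y ^ (2 * k) * appell \<alpha> n (inverse y))"
      using A by simp
    moreover have "poly p x = y ^ (2 * k) * appell \<alpha> n (inverse y)" using pw[of x] y by (simp add: y_def)
    ultimately show ?thesis by simp
  qed
  ultimately show ?thesis by blast
qed

lemma pderiv_Ap: "pderiv (Ap \<alpha> (Suc n)) = smult (of_nat (Suc n)) (Ap \<alpha> n)"
proof (rule poly_eqI)
  fix i
  have st: "(of_nat (Suc i) :: complex) * of_nat (Suc n choose Suc i) = of_nat (Suc n) * of_nat (n choose i)"
    by (metis Suc_times_binomial of_nat_mult)
  show "coeff (pderiv (Ap \<alpha> (Suc n))) i = coeff (smult (of_nat (Suc n)) (Ap \<alpha> n)) i"
    unfolding coeff_pderiv coeff_Ap coeff_smult using st by (simp add: mult_ac)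
qed

lemma top_coeff:
  assumes "degree F \<le> d"
  shows "coeff (pcompose F UU) (2 * d) = coeff F d"
proof (cases "degree F = d")
  case True
  have "lead_coeff (pcompose F UU) = lead_coeff F * lead_coeff UU ^ degree F"
    by (rule lead_coeff_comp) (simp add: degree_UU)
  moreover have "lead_coeff UU = 1" by (simp add: UU_def)
  moreover have dd: "degree (pcompose F UU) = 2 * d" using True by (simp add: degree_pcompose_UU)
  ultimately show ?thesis using True by simp
next
  case False
  hence "coeff F d = 0" "degree (pcompose F UU) < 2 * d" using assms by (auto simp: coeff_eq_0 degree_pcompose_UU)
  thus ?thesis by (simp add: coeff_eq_0)
qed

lemma coeff_LL_mult: "coeff (LL * q) (Suc i) = 2 * coeff q i - coeff q (Suc i)"
  by (simp add: LL_def)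



theorem mainTheorem17:
  fixes \<alpha> :: "nat \<Rightarrow> complex" and n :: nat
  assumes R: "propR \<alpha>" and odd: "odd n" and n1: "n \<ge> 1"
  shows "(\<forall>x. appell \<alpha> n x = (2 * x - 1) * poly (F_pol \<alpha> n) (x * (x - 1)))
    \<and> (\<forall>k. (-1) ^ k * f_coef \<alpha> n k = fps_nth (S_fps \<alpha> n (2 * int k)) k
             \<and> fps_nth (S_fps \<alpha> n (2 * int k)) k
                 = (deriv ^^ k) (appell_star \<alpha> n (2 * int k)) 1 / fact k)
    \<and> (\<forall>k > n div 2. \<exists>p. fps_of_poly p = S_fps \<alpha> n (2 * int k)
             \<and> (\<forall>x. x \<noteq> 0 \<longrightarrow> poly p x = - (x ^ (2 * k) * poly p (inverse x))))
    \<and> (f_coef \<alpha> n 0 = - \<alpha> n)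
    \<and> (f_coef \<alpha> n (n div 2) = \<alpha> 0 / 2)
    \<and> (\<forall>k > n div 2. f_coef \<alpha> n k = 0)
    \<and> (\<forall>k \<le> n. f_coef \<alpha> n k
             = (-1) ^ k * (\<Sum>\<nu>\<le>k. (of_int (2 * int k - int n) gchoose (k - \<nu>)) * s_coef \<alpha> n \<nu>)
           \<and> f_coef \<alpha> n k
             = (-1) ^ (k + 1) * (\<Sum>\<nu>\<le>k. of_nat ((2 * k - \<nu>) choose k) * of_nat (n choose \<nu>) * \<alpha> (n - \<nu>)))
    \<and> (\<forall>x. appell \<alpha> (n + 1) x = poly (F_pol \<alpha> (n + 1)) (x * (x - 1)))
    \<and> (f_coef \<alpha> (n + 1) 0 = \<alpha> (n + 1))
    \<and> (\<forall>k. 1 \<le> k \<and> k < (n + 1) div 2 \<longrightarrow>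
             f_coef \<alpha> (n + 1) k = of_nat (n + 1) / of_nat k * f_coef \<alpha> n (k - 1))
    \<and> (f_coef \<alpha> (n + 1) ((n + 1) div 2) = \<alpha> 0)
    \<and> (\<forall>k > (n + 1) div 2. f_coef \<alpha> (n + 1) k = 0)"

proof -
  have nmod: "n mod 2 = 1" using odd by presburger
  obtain F where Fd: "degree F \<le> n div 2" and rel: "Ap \<alpha> n = LL * pcompose F UU"
    using exists_odd[OF R odd] by blast
  have appF: "appell \<alpha> n x = (2 * x - 1) * poly F (x * (x - 1))" for x
    using arg_cong[OF rel, of "\<lambda>p. poly p x"] by (simp add: poly_Ap poly_pcompose poly_UU poly_LL)
  have FF: "F_pol \<alpha> n = F" by (rule F_pol_char[OF Fd]) (simp add: nmod appF)
  have fF: "f_coef \<alpha> n k = coeff F k" for k by (simp add: f_coef_def FF)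
  obtain G where Gd: "degree G \<le> (n + 1) div 2" and relG: "Ap \<alpha> (n + 1) = pcompose G UU"
    using exists_even[OF R] odd by (metis odd_Suc_div_two even_Suc Suc_eq_plus1 exists_even[OF R])
  have appG: "appell \<alpha> (n + 1) x = poly G (x * (x - 1))" for x
    using arg_cong[OF relG, of "\<lambda>p. poly p x"] by (simp add: poly_Ap poly_pcompose poly_UU)
  have nmod1: "(n + 1) mod 2 = 0" using odd by presburger
  have GG: "F_pol \<alpha> (n + 1) = G" by (rule F_pol_char[OF Gd]) (use nmod1 appG in simp)
  have gG: "f_coef \<alpha> (n + 1) k = coeff G k" for k by (simp only: f_coef_def GG)
  have gG': "f_coef \<alpha> (Suc n) k = coeff G k" for k using gG[of k] by simp
  have cb: "(S_fps \<alpha> n (2 * int k)) $ k = (-1)^k * coeff F k" for k by (rule core_b[OF rel])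
  have P1: "\<forall>x. appell \<alpha> n x = (2 * x - 1) * poly (F_pol \<alpha> n) (x * (x - 1))"
    using appF FF by simp
  have P2: "\<forall>k. (-1) ^ k * f_coef \<alpha> n k = fps_nth (S_fps \<alpha> n (2 * int k)) k
             \<and> fps_nth (S_fps \<alpha> n (2 * int k)) k
                 = (deriv ^^ k) (appell_star \<alpha> n (2 * int k)) 1 / fact k"
    using cb deriv_part by (simp add: fF)
  have P3: "\<forall>k > n div 2. \<exists>p. fps_of_poly p = S_fps \<alpha> n (2 * int k)
             \<and> (\<forall>x. x \<noteq> 0 \<longrightarrow> poly p x = - (x ^ (2 * k) * poly p (inverse x)))"
    using pal[OF R odd] by blast
  have P4: "f_coef \<alpha> n 0 = - \<alpha> n"
  proof -
    have "\<alpha> n = appell \<alpha> n 0" by (simp add: appell_def)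
    also have "\<dots> = - coeff F 0" using appF[of 0] by (simp add: poly_0_coeff_0)
    finally show ?thesis by (simp add: fF)
  qed
  have P5: "f_coef \<alpha> n (n div 2) = \<alpha> 0 / 2"
  proof -
    have nn: "n = Suc (2 * (n div 2))" using odd by presburger
    have "\<alpha> 0 = coeff (Ap \<alpha> n) n" by (simp add: coeff_Ap)
    also have "\<dots> = 2 * coeff (pcompose F UU) (2 * (n div 2)) - coeff (pcompose F UU) (Suc (2 * (n div 2)))"
      unfolding rel by (subst nn) (rule coeff_LL_mult)
    also have "coeff (pcompose F UU) (Suc (2 * (n div 2))) = 0"
      using Fd by (intro coeff_eq_0) (simp add: degree_pcompose_UU)
    also have "coeff (pcompose F UU) (2 * (n div 2)) = coeff F (n div 2)" by (rule top_coeff[OF Fd])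
    finally show ?thesis by (simp add: fF)
  qed
  have P6: "\<forall>k > n div 2. f_coef \<alpha> n k = 0"
    using Fd by (auto simp: fF coeff_eq_0)
  have P7: "\<forall>k \<le> n. f_coef \<alpha> n k
             = (-1) ^ k * (\<Sum>\<nu>\<le>k. (of_int (2 * int k - int n) gchoose (k - \<nu>)) * s_coef \<alpha> n \<nu>)
           \<and> f_coef \<alpha> n k
             = (-1) ^ (k + 1) * (\<Sum>\<nu>\<le>k. of_nat ((2 * k - \<nu>) choose k) * of_nat (n choose \<nu>) * \<alpha> (n - \<nu>))"
  proof (intro allI impI conjI)
    fix k assume kn: "k \<le> n"
    have sq: "(-1::complex)^k * (-1)^k = 1" by (simp flip: power_add)
    have "(S_fps \<alpha> n (2 * int k)) $ k = (\<Sum>\<nu>\<le>k. (of_int (2 * int k - int n) gchoose (k - \<nu>)) * s_coef \<alpha> n \<nu>)"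
      by (simp add: S_fps_def fps_mult_nth atMost_atLeast0 coeff_S_poly mult_ac)
    hence "(-1)^k * coeff F k = (\<Sum>\<nu>\<le>k. (of_int (2 * int k - int n) gchoose (k - \<nu>)) * s_coef \<alpha> n \<nu>)"
      using cb by simp
    hence "(-1)^k * ((-1)^k * coeff F k) = (-1)^k * (\<Sum>\<nu>\<le>k. (of_int (2 * int k - int n) gchoose (k - \<nu>)) * s_coef \<alpha> n \<nu>)"
      by simp
    thus "f_coef \<alpha> n k = (-1) ^ k * (\<Sum>\<nu>\<le>k. (of_int (2 * int k - int n) gchoose (k - \<nu>)) * s_coef \<alpha> n \<nu>)"
      by (simp add: fF mult.assoc[symmetric] sq)
    have "(-1)^(k+1) * (\<Sum>\<nu>\<le>k. of_nat ((2 * k - \<nu>) choose k) * of_nat (n choose \<nu>) * \<alpha> (n - \<nu>)) = (-1)^(k+1) * (- ((-1)^k * coeff F k))"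
      by (simp only: core_d[OF rel kn])
    also have "\<dots> = coeff F k" using sq by (simp add: algebra_simps)
    finally show "f_coef \<alpha> n k = (-1) ^ (k + 1) * (\<Sum>\<nu>\<le>k. of_nat ((2 * k - \<nu>) choose k) * of_nat (n choose \<nu>) * \<alpha> (n - \<nu>))"
      by (simp add: fF)
  qed
  have P8: "\<forall>x. appell \<alpha> (n + 1) x = poly (F_pol \<alpha> (n + 1)) (x * (x - 1))"
    using appG GG by simp
  have P9: "f_coef \<alpha> (n + 1) 0 = \<alpha> (n + 1)"
  proof -
    have "\<alpha> (n + 1) = appell \<alpha> (n + 1) 0" by (simp add: appell_def)
    also have "\<dots> = coeff G 0" using appG[of 0] by (simp add: poly_0_coeff_0)
    finally show ?thesis by (simp add: gG gG')
  qed
  have dG: "pderiv G = smult (of_nat (n + 1)) F"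
  proof -
    have "LL * pcompose (pderiv G) UU = pderiv (Ap \<alpha> (n + 1))"
    proof -
      have dU: "pderiv UU = LL" by (simp add: UU_def LL_def pderiv_pCons)
      show ?thesis unfolding relG pderiv_pcompose dU by (simp only: mult.commute)
    qed
    also have "\<dots> = smult (of_nat (n + 1)) (Ap \<alpha> n)" using pderiv_Ap[of \<alpha> n] by simp
    also have "\<dots> = LL * pcompose (smult (of_nat (n + 1)) F) UU" by (simp add: rel pcompose_smult)
    finally have eq: "LL * pcompose (pderiv G) UU = LL * pcompose (smult (of_nat (n + 1)) F) UU" .
    have LL0: "LL \<noteq> 0" by (simp add: LL_def)
    from eq have "pcompose (pderiv G) UU = pcompose (smult (of_nat (n + 1)) F) UU"
      using mult_left_cancel[OF LL0] by blast
    thus ?thesis by (rule pcompose_inj)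
  qed
  have P10: "\<forall>k. 1 \<le> k \<and> k < (n + 1) div 2 \<longrightarrow>
             f_coef \<alpha> (n + 1) k = of_nat (n + 1) / of_nat k * f_coef \<alpha> n (k - 1)"
  proof (intro allI impI)
    fix k assume "1 \<le> k \<and> k < (n + 1) div 2"
    then obtain j where kj: "k = Suc j" using not0_implies_Suc by fastforce
    have "of_nat (Suc j) * coeff G (Suc j) = of_nat (n + 1) * coeff F j"
      using arg_cong[OF dG, of "\<lambda>p. coeff p j"] by (simp add: coeff_pderiv)
    thus "f_coef \<alpha> (n + 1) k = of_nat (n + 1) / of_nat k * f_coef \<alpha> n (k - 1)"
      unfolding kj gG fF by (simp add: field_simps del: of_nat_Suc)
  qed
  have P11: "f_coef \<alpha> (n + 1) ((n + 1) div 2) = \<alpha> 0"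
  proof -
    have nn: "n + 1 = 2 * ((n + 1) div 2)" using odd by presburger
    have "\<alpha> 0 = coeff (Ap \<alpha> (n + 1)) (n + 1)" by (simp add: coeff_Ap)
    also have "\<dots> = coeff (pcompose G UU) (2 * ((n + 1) div 2))" unfolding relG by (subst nn) (rule refl)
    also have "\<dots> = coeff G ((n + 1) div 2)" by (rule top_coeff[OF Gd])
    finally show ?thesis by (simp add: gG gG')
  qed
  have P12: "\<forall>k > (n + 1) div 2. f_coef \<alpha> (n + 1) k = 0"
    using Gd by (auto simp: gG gG' coeff_eq_0)
  show ?thesis using P1 P2 P3 P4 P5 P6 P7 P8 P9 P10 P11 P12 by blast
qed


end
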